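(* Let $(X,d)$ be a metric space. The following are equivalent: (i) $(X,d)$ is ultrametric; (ii) for every $W\subseteq X$ and every $\varepsilon>0$, $$\mathcal M^*_\varepsilon(W)=\hat{\mathcal N}^X_\varepsilon(W)=\hat{\mathcal N}_\varepsilon(W)=\hat{\mathcal M}_\varepsilon(W);$$ (iii) for every compact $W\subseteq X$ and every $\varepsilon>0$, $\mathcal N_\varepsilon(W)=\mathcal M_\varepsilon(W)$.
   Context: $(X,d)$ is ultrametric if $d(x,y)\le\max\{d(x,z),d(z,y)\}$ for all $x,y,z$. Closed balls: $B(c,r)=\{x:d(x,c)\le r\}$. $C$ is an $\varepsilon$-net for $W$ if $W\subseteq\bigcup_{c\in C}B(c,\varepsilon)$. $A$ is $\varepsilon$-distinguishable if $d(x,y)>\varepsilon$ for distinct $x,y\in A$. For a totally bounded $W$, the covering number $\mathcal N_\varepsilon(W)$ is the smallest cardinality of a subset of $W$ which is an $\varepsilon$-net for $W$, and the packing number $\mathcal M_\varepsilon(W)$ is the maximal cardinality of an $\varepsilon$-distinguishable subset of $W$. For arbitrary $W,A\subseteq X$: $\hat{\mathcal N}^A_\varepsilon(W)$ is the minimal cardinality of an $\varepsilon$-net $C\subseteq A$ for $W$; $\hat{\mathcal N}_\varepsilon(W):=\hat{\mathcal N}^W_\varepsilon(W)$; $\hat{\mathcal M}_\varepsilon(W)$ is the smallest cardinality of an $\varepsilon$-distinguishable $A\subseteq W$ that is maximal under inclusion among $\varepsilon$-distinguishable subsets of $W$; $\mathcal M^*_\varepsilon(W)$ is the smallest cardinal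 $\ge\operatorname{card}(A)$ for every $\varepsilon$-distinguishable $A\subseteq W$. *)

theory Defs
  imports "HOL-Analysis.Analysis"
begin

text \<open>Metric space (M,d) given by the locale Metric_space. Cardinals are represented
  by cardinal-order relations card_of (BNF cardinals), compared with =o / \<le>o.\<close>

definition ultrametric :: "'a set \<Rightarrow> ('a \<Rightarrow> 'a \<Rightarrow> real) \<Rightarrow> bool" where
  "ultrametric M d \<longleftrightarrow>
     (\<forall>x\<in>M. \<forall>y\<in>M. \<forall>z\<in>M. d x y \<le> max (d x z) (d z y))"

definition cball_in :: "'a set \<Rightarrow> ('a \<Rightarrow> 'a \<Rightarrow> real) \<Rightarrow> 'a \<Rightarrow> real \<Rightarrow> 'a set" where
  "cball_in M d c r = {x\<in>M. d x c \<le> r}"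

definition eps_net :: "'a set \<Rightarrow> ('a \<Rightarrow> 'a \<Rightarrow> real) \<Rightarrow> real \<Rightarrow> 'a set \<Rightarrow> 'a set \<Rightarrow> bool" where
  "eps_net M d \<epsilon> C W \<longleftrightarrow> W \<subseteq> (\<Union>c\<in>C. cball_in M d c \<epsilon>)"

definition eps_dist :: "('a \<Rightarrow> 'a \<Rightarrow> real) \<Rightarrow> real \<Rightarrow> 'a set \<Rightarrow> bool" where
  "eps_dist d \<epsilon> A \<longleftrightarrow> (\<forall>x\<in>A. \<forall>y\<in>A. x \<noteq> y \<longrightarrow> d x y > \<epsilon>)"

text \<open>The smallest cardinality of a set satisfying P (as a cardinal, i.e. card_of of a
  minimising witness; cardinals are well-ordered so a minimiser exists when P is satisfiable).\<close>
definition min_card :: "('a set \<Rightarrow> bool) \<Rightarrow> 'a rel" where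
  "min_card P = card_of (SOME C. P C \<and> (\<forall>C'. P C' \<longrightarrow> ordLeq3 (card_of C) (card_of C')))"

definition hatN_in :: "'a set \<Rightarrow> ('a \<Rightarrow> 'a \<Rightarrow> real) \<Rightarrow> 'a set \<Rightarrow> real \<Rightarrow> 'a set \<Rightarrow> 'a rel" where
  "hatN_in M d A \<epsilon> W = min_card (\<lambda>C. C \<subseteq> A \<and> eps_net M d \<epsilon> C W)"

definition hatN :: "'a set \<Rightarrow> ('a \<Rightarrow> 'a \<Rightarrow> real) \<Rightarrow> real \<Rightarrow> 'a set \<Rightarrow> 'a rel" where
  "hatN M d \<epsilon> W = hatN_in M d W \<epsilon> W"

definition hatM :: "('a \<Rightarrow> 'a \<Rightarrow> real) \<Rightarrow> real \<Rightarrow> 'a set \<Rightarrow> 'a rel" where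
  "hatM d \<epsilon> W = min_card (\<lambda>A. A \<subseteq> W \<and> eps_dist d \<epsilon> A \<and>
       (\<forall>B. A \<subseteq> B \<and> B \<subseteq> W \<and> eps_dist d \<epsilon> B \<longrightarrow> B = A))"

text \<open>M*_eps(W): smallest cardinal \<ge> card A for every eps-distinguishable A \<subseteq> W.
  Such a cardinal is \<le> |W|, hence it is the cardinality of some subset of W.\<close>
definition Mstar :: "('a \<Rightarrow> 'a \<Rightarrow> real) \<Rightarrow> real \<Rightarrow> 'a set \<Rightarrow> 'a rel" where
  "Mstar d \<epsilon> W = min_card (\<lambda>B. B \<subseteq> W \<and>
       (\<forall>A. A \<subseteq> W \<and> eps_dist d \<epsilon> A \<longrightarrow> ordLeq3 (card_of A) (card_of B)))"

definition covering_number :: "'a set \<Rightarrow> ('a \<Rightarrow> 'a \<Rightarrow> real) \<Rightarrow> real \<Rightarrow> 'a set \<Rightarrow> nat" where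
  "covering_number M d \<epsilon> W = (LEAST n. \<exists>C. C \<subseteq> W \<and> finite C \<and> card C = n \<and> eps_net M d \<epsilon> C W)"

definition packing_number :: "('a \<Rightarrow> 'a \<Rightarrow> real) \<Rightarrow> real \<Rightarrow> 'a set \<Rightarrow> nat" where
  "packing_number d \<epsilon> W = (GREATEST n. \<exists>A. A \<subseteq> W \<and> finite A \<and> card A = n \<and> eps_dist d \<epsilon> A)"

end

theory Submission
  imports Defs
begin

lemma min_card_spec:
  assumes "P C0"
  shows "P (SOME C. P C \<and> (\<forall>C'. P C' \<longrightarrow> ordLeq3 (card_of C) (card_of C'))) \<and>
    (\<forall>C'. P C' \<longrightarrow> ordLeq3 (card_of (SOME C. P C \<and> (\<forall>C'. P C' \<longrightarrow> ordLeq3 (card_of C) (card_of C')))) (card_of C'))"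
proof -
  have "\<exists>r \<in> card_of ` {C. P C}. \<forall>r' \<in> card_of ` {C. P C}. ordLeq3 r r'"
    by (rule exists_minim_Well_order) (use assms card_of_Well_order in auto)
  then have "\<exists>C. P C \<and> (\<forall>C'. P C' \<longrightarrow> ordLeq3 (card_of C) (card_of C'))" by auto
  then show ?thesis by (rule someI_ex)
qed

lemma min_card_iso:
  assumes "P T" "\<forall>C. P C \<longrightarrow> ordLeq3 (card_of T) (card_of C)"
  shows "ordIso2 (min_card P) (card_of T)"
proof -
  note s = min_card_spec[of P T, OF assms(1)]
  show ?thesis unfolding min_card_def ordIso_iff_ordLeq
    using s assms by blast
qed

lemma min_card_le:
  assumes "P T"
  shows "ordLeq3 (min_card P) (card_of T)"
  using min_card_spec[of P T, OF assms] assms unfolding min_card_def by blast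

lemma min_card_ge:
  assumes "P T" "\<And>C. P C \<Longrightarrow> ordLeq3 (card_of A) (card_of C)"
  shows "ordLeq3 (card_of A) (min_card P)"
  using min_card_spec[of P T, OF assms(1)] assms(2) unfolding min_card_def by blast

context Metric_space
begin

lemma inj_net:
  assumes u: "ultrametric M d" and W: "W \<subseteq> M" and A: "A \<subseteq> W" and C: "C \<subseteq> M"
    and dA: "eps_dist d \<epsilon> A" and net: "eps_net M d \<epsilon> C W"
  shows "ordLeq3 (card_of A) (card_of C)"
proof -
  define f where "f a = (SOME c. c \<in> C \<and> d a c \<le> \<epsilon>)" for a
  have f: "f a \<in> C \<and> d a (f a) \<le> \<epsilon>" if "a \<in> A" for a
  proof -
    from net that A obtain c where "c \<in> C \<and> d a c \<le> \<epsilon>"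
      unfolding eps_net_def cball_in_def by blast
    then show ?thesis unfolding f_def by (rule someI)
  qed
  have "inj_on f A"
  proof (rule inj_onI, rule ccontr)
    fix a a' assume a: "a \<in> A" "a' \<in> A" "f a = f a'" "a \<noteq> a'"
    have "d a a' \<le> max (d a (f a)) (d (f a) a')"
      using u a A W C f[OF a(1)] unfolding ultrametric_def by blast
    also have "d (f a) a' = d a' (f a')" using a commute by simp
    finally have "d a a' \<le> \<epsilon>" using f[OF a(1)] f[OF a(2)] by (meson max.boundedI order_trans)
    with dA a show False unfolding eps_dist_def by force
  qed
  moreover have "f ` A \<subseteq> C" using f by auto
  ultimately show ?thesis using card_of_ordLeq by blast
qed

lemma maximal_net:
  assumes W: "W \<subseteq> M" and A: "A \<subseteq> W" and e: "\<epsilon> > 0" and dA: "eps_dist d \<epsilon> A"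
    and mx: "\<forall>B. A \<subseteq> B \<and> B \<subseteq> W \<and> eps_dist d \<epsilon> B \<longrightarrow> B = A"
  shows "eps_net M d \<epsilon> A W"
  unfolding eps_net_def cball_in_def
proof
  fix w assume w: "w \<in> W"
  show "w \<in> (\<Union>c\<in>A. {x \<in> M. d x c \<le> \<epsilon>})"
  proof (cases "w \<in> A")
    case True then show ?thesis using w W e by (intro UN_I[of w]) auto
  next
    case False
    have "\<not> eps_dist d \<epsilon> (insert w A)" using mx False w A by blast
    then obtain a where "a \<in> A" "d w a \<le> \<epsilon> \<or> d a w \<le> \<epsilon>"
      using dA unfolding eps_dist_def by force
    then show ?thesis using commute w W by (auto simp: not_less)
  qed
qed

lemma exists_maximal:
  "\<exists>T. T \<subseteq> W \<and> eps_dist d \<epsilon> T \<and> (\<forall>B. T \<subseteq> B \<and> B \<subseteq> W \<and> eps_dist d \<epsilon> B \<longrightarrow> B = T)"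
proof -
  let ?A = "{A. A \<subseteq> W \<and> eps_dist d \<epsilon> A}"
  have "\<forall>C\<in>chains ?A. \<Union>C \<in> ?A"
  proof
    fix C assume C: "C \<in> chains ?A"
    have "eps_dist d \<epsilon> (\<Union>C)" unfolding eps_dist_def
    proof (intro ballI impI)
      fix x y assume "x \<in> \<Union>C" "y \<in> \<Union>C" "x \<noteq> y"
      then obtain X Y where XY: "X \<in> C" "Y \<in> C" "x \<in> X" "y \<in> Y" by auto
      from C XY have "X \<subseteq> Y \<or> Y \<subseteq> X" unfolding chains_def chain_subset_def by blast
      then show "d x y > \<epsilon>" using XY C \<open>x \<noteq> y\<close> unfolding chains_def eps_dist_def by blast
    qed
    then show "\<Union>C \<in> ?A" using C unfolding chains_def by blast
  qed
  from Zorn_Lemma[OF this] obtain T where "T \<in> ?A" "\<forall>X\<in>?A. T \<subseteq> X \<longrightarrow> X = T" by blast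
  then show ?thesis by auto
qed

lemma part1_fwd:
  assumes u: "ultrametric M d" and W: "W \<subseteq> M" and e: "\<epsilon> > 0"
  shows "ordIso2 (Mstar d \<epsilon> W) (hatN_in M d M \<epsilon> W) \<and>
         ordIso2 (hatN_in M d M \<epsilon> W) (hatN M d \<epsilon> W) \<and>
         ordIso2 (hatN M d \<epsilon> W) (hatM d \<epsilon> W)"
proof -
  obtain T where T: "T \<subseteq> W" "eps_dist d \<epsilon> T"
    "\<forall>B. T \<subseteq> B \<and> B \<subseteq> W \<and> eps_dist d \<epsilon> B \<longrightarrow> B = T"
    using exists_maximal by blast
  have netT: "eps_net M d \<epsilon> T W" using maximal_net[OF W T(1) e T(2,3)] .
  have le: "ordLeq3 (card_of A) (card_of C)" if "A \<subseteq> W" "C \<subseteq> M" "eps_dist d \<epsilon> A"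
      "eps_net M d \<epsilon> C W" for A C
    using inj_net[OF u W that(1,2,3,4)] .
  have TM: "T \<subseteq> M" using T W by blast
  have 1: "ordIso2 (Mstar d \<epsilon> W) (card_of T)" unfolding Mstar_def
  proof (rule min_card_iso)
    show "T \<subseteq> W \<and> (\<forall>A. A \<subseteq> W \<and> eps_dist d \<epsilon> A \<longrightarrow> ordLeq3 (card_of A) (card_of T))"
      using T(1) le[OF _ TM _ netT] by blast
    show "\<forall>C. C \<subseteq> W \<and> (\<forall>A. A \<subseteq> W \<and> eps_dist d \<epsilon> A \<longrightarrow> ordLeq3 (card_of A) (card_of C))
       \<longrightarrow> ordLeq3 (card_of T) (card_of C)"
      using T(1,2) by blast
  qed
  have 2: "ordIso2 (hatN_in M d M \<epsilon> W) (card_of T)" unfolding hatN_in_def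
  proof (rule min_card_iso)
    show "T \<subseteq> M \<and> eps_net M d \<epsilon> T W" using TM netT by blast
    show "\<forall>C. C \<subseteq> M \<and> eps_net M d \<epsilon> C W \<longrightarrow> ordLeq3 (card_of T) (card_of C)"
      using le[OF T(1) _ T(2)] by blast
  qed
  have 3: "ordIso2 (hatN M d \<epsilon> W) (card_of T)" unfolding hatN_def hatN_in_def
  proof (rule min_card_iso)
    show "T \<subseteq> W \<and> eps_net M d \<epsilon> T W" using T(1) netT by blast
    show "\<forall>C. C \<subseteq> W \<and> eps_net M d \<epsilon> C W \<longrightarrow> ordLeq3 (card_of T) (card_of C)"
      using le[OF T(1) _ T(2)] W by blast
  qed
  have 4: "ordIso2 (hatM d \<epsilon> W) (card_of T)" unfolding hatM_def
  proof (rule min_card_iso)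
    show "T \<subseteq> W \<and> eps_dist d \<epsilon> T \<and> (\<forall>B. T \<subseteq> B \<and> B \<subseteq> W \<and> eps_dist d \<epsilon> B \<longrightarrow> B = T)"
      using T by blast
    show "\<forall>C. C \<subseteq> W \<and> eps_dist d \<epsilon> C \<and> (\<forall>B. C \<subseteq> B \<and> B \<subseteq> W \<and> eps_dist d \<epsilon> B \<longrightarrow> B = C)
        \<longrightarrow> ordLeq3 (card_of T) (card_of C)"
    proof (intro allI impI)
      fix C assume C: "C \<subseteq> W \<and> eps_dist d \<epsilon> C \<and> (\<forall>B. C \<subseteq> B \<and> B \<subseteq> W \<and> eps_dist d \<epsilon> B \<longrightarrow> B = C)"
      then have "eps_net M d \<epsilon> C W" using maximal_net[OF W _ e] by blast
      then show "ordLeq3 (card_of T) (card_of C)" using le[OF T(1) _ T(2)] C W by blast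
    qed
  qed
  have 5: "ordIso2 (card_of T) (hatN_in M d M \<epsilon> W)" using 2 by (rule ordIso_symmetric)
  have 6: "ordIso2 (card_of T) (hatN M d \<epsilon> W)" using 3 by (rule ordIso_symmetric)
  have 7: "ordIso2 (card_of T) (hatM d \<epsilon> W)" using 4 by (rule ordIso_symmetric)
  have a: "ordIso2 (Mstar d \<epsilon> W) (hatN_in M d M \<epsilon> W)" by (rule ordIso_transitive[OF 1 5])
  have b: "ordIso2 (hatN_in M d M \<epsilon> W) (hatN M d \<epsilon> W)" by (rule ordIso_transitive[OF 2 6])
  have c: "ordIso2 (hatN M d \<epsilon> W) (hatM d \<epsilon> W)" by (rule ordIso_transitive[OF 3 7])
  from a b c show ?thesis by (intro conjI)
qed

lemma part2_fwd:
  assumes u: "ultrametric M d" and W: "W \<subseteq> M" and e: "\<epsilon> > 0"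
    and cW: "compactin mtopology W"
  shows "covering_number M d \<epsilon> W = packing_number d \<epsilon> W"
proof -
  obtain T where T: "T \<subseteq> W" "eps_dist d \<epsilon> T"
    "\<forall>B. T \<subseteq> B \<and> B \<subseteq> W \<and> eps_dist d \<epsilon> B \<longrightarrow> B = T"
    using exists_maximal by blast
  have netT: "eps_net M d \<epsilon> T W" using maximal_net[OF W T(1) e T(2,3)] .
  have "mtotally_bounded W" using compactin_imp_mtotally_bounded[OF cW] .
  then have "\<exists>K. finite K \<and> K \<subseteq> W \<and> W \<subseteq> (\<Union>x\<in>K. mball x \<epsilon>)"
    unfolding mtotally_bounded_def using e by blast
  then obtain K where K: "finite K" "K \<subseteq> W" "W \<subseteq> (\<Union>x\<in>K. mball x \<epsilon>)" by blast
  have netK: "eps_net M d \<epsilon> K W" unfolding eps_net_def cball_in_def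
  proof
    fix w assume "w \<in> W"
    with K(3) obtain k where "k \<in> K" "w \<in> mball k \<epsilon>" by blast
    then have "k \<in> M" "w \<in> M" "d k w < \<epsilon>" by auto
    then have "w \<in> {x \<in> M. d x k \<le> \<epsilon>}" by (simp add: commute[of w k])
    then show "w \<in> (\<Union>c\<in>K. {x \<in> M. d x c \<le> \<epsilon>})" using \<open>k \<in> K\<close> by blast
  qed
  have fin: "finite A \<and> card A \<le> card C" if "A \<subseteq> W" "C \<subseteq> M" "finite C" "eps_dist d \<epsilon> A"
      "eps_net M d \<epsilon> C W" for A C
  proof -
    from inj_net[OF u W that(1,2,4,5)] obtain f where inj: "inj_on f A" and im: "f ` A \<subseteq> C"
      using card_of_ordLeq[of A C] by blast
    have fi: "finite (f ` A)" using finite_subset[OF im that(3)] .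
    have "finite A" using finite_imageD[OF fi inj] .
    moreover have "card A \<le> card C" using card_inj_on_le[OF inj im that(3)] .
    ultimately show ?thesis by simp
  qed
  have KM: "K \<subseteq> M" using K(2) W by blast
  have finT: "finite T" using fin[OF T(1) KM K(1) T(2) netK] by simp
  have "covering_number M d \<epsilon> W = card T" unfolding covering_number_def
  proof (rule Least_equality)
    show "\<exists>C. C \<subseteq> W \<and> finite C \<and> card C = card T \<and> eps_net M d \<epsilon> C W"
      using T finT netT by blast
    fix y assume "\<exists>C. C \<subseteq> W \<and> finite C \<and> card C = y \<and> eps_net M d \<epsilon> C W"
    then obtain C where C: "C \<subseteq> W" "finite C" "card C = y" "eps_net M d \<epsilon> C W" by blast
    have "C \<subseteq> M" using C(1) W by blast
    then show "card T \<le> y" using fin[OF T(1) _ C(2) T(2) C(4)] C(3) by simp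
  qed
  moreover have "packing_number d \<epsilon> W = card T" unfolding packing_number_def
  proof (rule Greatest_equality)
    show "\<exists>A. A \<subseteq> W \<and> finite A \<and> card A = card T \<and> eps_dist d \<epsilon> A"
      using T finT by blast
    fix y assume "\<exists>A. A \<subseteq> W \<and> finite A \<and> card A = y \<and> eps_dist d \<epsilon> A"
    then obtain A where A: "A \<subseteq> W" "finite A" "card A = y" "eps_dist d \<epsilon> A" by blast
    have "T \<subseteq> M" using T(1) W by blast
    then show "y \<le> card T" using fin[OF A(1) _ finT A(4) netT] A(3) by simp
  qed
  ultimately show ?thesis by simp
qed

lemma non_ultra:
  assumes "\<not> ultrametric M d"
  obtains x y z \<epsilon> where "x \<in> M" "y \<in> M" "z \<in> M" "\<epsilon> > 0" "x \<noteq> y"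
    "d x y > \<epsilon>" "d y x > \<epsilon>" "d x z \<le> \<epsilon>" "d y z \<le> \<epsilon>" "d z z \<le> \<epsilon>"
proof -
  from assms obtain x y z where xyz: "x \<in> M" "y \<in> M" "z \<in> M" "d x y > max (d x z) (d z y)"
    unfolding ultrametric_def by force
  define e where "e = max (d x z) (d z y)"
  have "e > 0"
  proof (rule ccontr)
    assume "\<not> e > 0"
    then have "d x z = 0" "d z y = 0" unfolding e_def by (auto intro: antisym)
    then have "x = y" using xyz by simp
    then have "d x y = 0" using xyz(2) by simp
    moreover have "d x z \<le> max (d x z) (d z y)" by simp
    ultimately show False using xyz(4) nonneg[of x z] by linarith
  qed
  moreover have "x \<noteq> y"
  proof
    assume "x = y"
    then have "d x y = 0" using xyz(2) by simp
    moreover have "0 \<le> max (d x z) (d z y)" by (simp add: le_max_iff_disj)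
    ultimately show False using xyz(4) by linarith
  qed
  moreover have "d x y > e" "d y x > e" "d x z \<le> e" "d y z \<le> e" "d z z \<le> e"
    using xyz commute[of y x] commute[of y z] \<open>e > 0\<close> unfolding e_def by auto
  ultimately show ?thesis using that[of x y z e] xyz(1-3) by blast
qed

end

theorem theorem2p9:
  fixes M :: "'a set" and d :: "'a \<Rightarrow> 'a \<Rightarrow> real"
  assumes "Metric_space M d"
  shows "(ultrametric M d
          \<longleftrightarrow> (\<forall>W \<epsilon>. W \<subseteq> M \<and> \<epsilon> > 0 \<longrightarrow>
                 ordIso2 (Mstar d \<epsilon> W) (hatN_in M d M \<epsilon> W) \<and>
                 ordIso2 (hatN_in M d M \<epsilon> W) (hatN M d \<epsilon> W) \<and>
                 ordIso2 (hatN M d \<epsilon> W) (hatM d \<epsilon> W)))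
       \<and> (ultrametric M d
          \<longleftrightarrow> (\<forall>W \<epsilon>. W \<subseteq> M \<and> compactin (Metric_space.mtopology M d) W \<and> \<epsilon> > 0 \<longrightarrow>
                 covering_number M d \<epsilon> W = packing_number d \<epsilon> W))"
proof -
  interpret Metric_space M d by fact
  have A: "\<not> (\<forall>W \<epsilon>. W \<subseteq> M \<and> \<epsilon> > 0 \<longrightarrow>
                 ordIso2 (Mstar d \<epsilon> W) (hatN_in M d M \<epsilon> W) \<and>
                 ordIso2 (hatN_in M d M \<epsilon> W) (hatN M d \<epsilon> W) \<and>
                 ordIso2 (hatN M d \<epsilon> W) (hatM d \<epsilon> W))"
    if nu: "\<not> ultrametric M d"
  proof -
    obtain x y z e where xyz: "x \<in> M" "y \<in> M" "z \<in> M" "e > 0" "x \<noteq> y"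
      "d x y > e" "d y x > e" "d x z \<le> e" "d y z \<le> e" "d z z \<le> e"
      using non_ultra[OF nu] by blast
    define W where "W = {x, y, z}"
    have WM: "W \<subseteq> M" using xyz W_def by auto
    have distxy: "eps_dist d e {x, y}" using xyz unfolding eps_dist_def by auto
    have netz: "eps_net M d e {z} W" using xyz unfolding eps_net_def cball_in_def W_def by auto
    show ?thesis
    proof
      assume H: "\<forall>W \<epsilon>. W \<subseteq> M \<and> \<epsilon> > 0 \<longrightarrow>
                 ordIso2 (Mstar d \<epsilon> W) (hatN_in M d M \<epsilon> W) \<and>
                 ordIso2 (hatN_in M d M \<epsilon> W) (hatN M d \<epsilon> W) \<and>
                 ordIso2 (hatN M d \<epsilon> W) (hatM d \<epsilon> W)"
      then have iso: "ordIso2 (Mstar d e W) (hatN_in M d M e W)" using WM xyz by blast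
      have 1: "ordLeq3 (card_of {x, y}) (Mstar d e W)" unfolding Mstar_def
      proof (rule min_card_ge[where T=W])
        show "W \<subseteq> W \<and> (\<forall>A. A \<subseteq> W \<and> eps_dist d e A \<longrightarrow> ordLeq3 (card_of A) (card_of W))"
          by (auto intro: card_of_mono1)
        fix C assume "C \<subseteq> W \<and> (\<forall>A. A \<subseteq> W \<and> eps_dist d e A \<longrightarrow> ordLeq3 (card_of A) (card_of C))"
        moreover have "{x, y} \<subseteq> W" unfolding W_def by blast
        ultimately show "ordLeq3 (card_of {x, y}) (card_of C)" using distxy by blast
      qed
      have 2: "ordLeq3 (hatN_in M d M e W) (card_of {z})" unfolding hatN_in_def
        by (rule min_card_le) (use netz xyz in blast)
      have "ordLeq3 (card_of {x, y}) (card_of {z})"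
        using 1 iso 2 ordLeq_ordIso_trans ordLeq_transitive by metis
      then obtain f where inj: "inj_on f {x, y}" and im: "f ` {x, y} \<subseteq> {z}"
        using card_of_ordLeq[of "{x,y}" "{z}"] by blast
      from im have "f x = f y" by auto
      then show False using inj_onD[OF inj] xyz(5) by blast
    qed
  qed
  have B: "\<not> (\<forall>W \<epsilon>. W \<subseteq> M \<and> compactin mtopology W \<and> \<epsilon> > 0 \<longrightarrow>
                 covering_number M d \<epsilon> W = packing_number d \<epsilon> W)"
    if nu: "\<not> ultrametric M d"
  proof -
    obtain x y z e where xyz: "x \<in> M" "y \<in> M" "z \<in> M" "e > 0" "x \<noteq> y"
      "d x y > e" "d y x > e" "d x z \<le> e" "d y z \<le> e" "d z z \<le> e"
      using non_ultra[OF nu] by blast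
    define W where "W = {x, y, z}"
    have WM: "W \<subseteq> M" using xyz W_def by auto
    have distxy: "eps_dist d e {x, y}" using xyz unfolding eps_dist_def by auto
    have netz: "eps_net M d e {z} W" using xyz unfolding eps_net_def cball_in_def W_def by auto
    show ?thesis
    proof
      assume H: "\<forall>W \<epsilon>. W \<subseteq> M \<and> compactin mtopology W \<and> \<epsilon> > 0 \<longrightarrow>
                 covering_number M d \<epsilon> W = packing_number d \<epsilon> W"
      have "compactin mtopology W" by (rule finite_imp_compactin) (use WM W_def in auto)
      then have eq: "covering_number M d e W = packing_number d e W" using H WM xyz(4) by simp
      have "covering_number M d e W \<le> 1" unfolding covering_number_def
      proof (rule Least_le)
        show "\<exists>C. C \<subseteq> W \<and> finite C \<and> card C = 1 \<and> eps_net M d e C W"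
          using netz W_def by (intro exI[of _ "{z}"]) auto
      qed
      moreover have "2 \<le> packing_number d e W" unfolding packing_number_def
      proof (rule Greatest_le_nat[where b=3])
        show "\<exists>A. A \<subseteq> W \<and> finite A \<and> card A = 2 \<and> eps_dist d e A"
          using distxy xyz W_def by (intro exI[of _ "{x,y}"]) auto
        fix n assume "\<exists>A. A \<subseteq> W \<and> finite A \<and> card A = n \<and> eps_dist d e A"
          then obtain A where "A \<subseteq> W" "card A = n" by blast
          moreover have "card W \<le> 3" unfolding W_def using card_length[of "[x,y,z]"] by simp
          ultimately show "n \<le> 3" using card_mono[of W A] W_def by auto
      qed
      ultimately show False using eq by simp
    qed
  qed
  have C: "\<forall>W \<epsilon>. W \<subseteq> M \<and> \<epsilon> > 0 \<longrightarrow>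
                 ordIso2 (Mstar d \<epsilon> W) (hatN_in M d M \<epsilon> W) \<and>
                 ordIso2 (hatN_in M d M \<epsilon> W) (hatN M d \<epsilon> W) \<and>
                 ordIso2 (hatN M d \<epsilon> W) (hatM d \<epsilon> W)" if u: "ultrametric M d"
  proof (intro allI impI)
    fix W \<epsilon> assume "W \<subseteq> M \<and> (\<epsilon>::real) > 0"
    then show "ordIso2 (Mstar d \<epsilon> W) (hatN_in M d M \<epsilon> W) \<and>
                 ordIso2 (hatN_in M d M \<epsilon> W) (hatN M d \<epsilon> W) \<and>
                 ordIso2 (hatN M d \<epsilon> W) (hatM d \<epsilon> W)" using part1_fwd[OF u] by blast
  qed
  have D: "\<forall>W \<epsilon>. W \<subseteq> M \<and> compactin mtopology W \<and> \<epsilon> > 0 \<longrightarrow>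
                 covering_number M d \<epsilon> W = packing_number d \<epsilon> W" if u: "ultrametric M d"
  proof (intro allI impI)
    fix W \<epsilon> assume "W \<subseteq> M \<and> compactin mtopology W \<and> (\<epsilon>::real) > 0"
    then show "covering_number M d \<epsilon> W = packing_number d \<epsilon> W" using part2_fwd[OF u] by blast
  qed
  show ?thesis using A B C D by meson
qed

end
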